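(* Let $M>0$, $R_1>2M$, and let $\rho\in L^1([2M,R_1])$ with $\rho\ge0$. Define $m(r):=M-\int_r^{R_1}4\pi\eta^2\rho(\eta)\,d\eta$ for $r\in[2M,R_1]$, assume $0\le 2m(r)/r<1$ for all $r\in[2M,R_1]$, and set $e^{2\lambda(r)}:=(1-2m(r)/r)^{-1}$. Then for all $r\in[2M,R_1]$, $$\exp\Big(-2\int_r^{R_1}4\pi\eta\,\rho(\eta)\,e^{2\lambda(\eta)}\,d\eta\Big)\ \ge\ \frac{r-2M}{r-2m(r)}.$$ *)

theory Defs
  imports "HOL-Analysis.Analysis"
begin

definition mass :: "real \<Rightarrow> real \<Rightarrow> (real \<Rightarrow> real) \<Rightarrow> real \<Rightarrow> real" where
  "mass M R1 \<rho> r = M - (LINT \<eta>:{r..R1}|lborel. 4 * pi * \<eta>^2 * \<rho> \<eta>)"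

definition e2lambda :: "real \<Rightarrow> real \<Rightarrow> (real \<Rightarrow> real) \<Rightarrow> real \<Rightarrow> real" where
  "e2lambda M R1 \<rho> r = inverse (1 - 2 * mass M R1 \<rho> r / r)"

end

theory Submission
  imports Defs
begin

lemma setint_cont_mult:
  fixes w \<rho> :: "real \<Rightarrow> real"
  assumes rho: "set_integrable lborel {p..q} \<rho>" and w: "continuous_on {a..b} w"
    and sub: "{a..b} \<subseteq> {p..q}"
  shows "set_integrable lborel {a..b} (\<lambda>x. w x * \<rho> x)"
proof (cases "a \<le> b")
  case False
  then have "{a..b} = {}" by auto
  then show ?thesis by (simp add: set_integrable_def)
next
  case True
  have "compact (w ` {a..b})" by (rule compact_continuous_image[OF w]) auto
  then have "bounded (w ` {a..b})" by (rule compact_imp_bounded)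
  then have "\<exists>B. \<forall>x\<in>{a..b}. \<bar>w x\<bar> \<le> B" unfolding bounded_real by auto
  then obtain B where B: "\<And>x. x \<in> {a..b} \<Longrightarrow> \<bar>w x\<bar> \<le> B" by blast
  have B0: "0 \<le> B" using B[of a] True by auto
  have ri: "integrable lborel (\<lambda>x. indicator {p..q} x *\<^sub>R \<rho> x)"
    using rho unfolding set_integrable_def .
  have eq: "(\<lambda>x. indicator {a..b} x *\<^sub>R (w x * \<rho> x)) =
      (\<lambda>x. (indicator {a..b} x *\<^sub>R w x) * (indicator {p..q} x *\<^sub>R \<rho> x))"
    using sub by (auto simp: indicator_def fun_eq_iff)
  show ?thesis unfolding set_integrable_def
  proof (rule Bochner_Integration.integrable_bound[where f="\<lambda>x. B * (indicator {p..q} x *\<^sub>R \<rho> x)"])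
    show "integrable lborel (\<lambda>x. B * (indicator {p..q} x *\<^sub>R \<rho> x))"
      using ri by simp
    show "(\<lambda>x. indicator {a..b} x *\<^sub>R (w x * \<rho> x)) \<in> borel_measurable lborel"
      unfolding eq
    proof (intro borel_measurable_times borel_measurable_integrable[OF ri])
      have "(\<lambda>x. indicator {a..b} x *\<^sub>R w x) \<in> borel_measurable borel"
        by (rule borel_measurable_continuous_on_indicator[OF _ w]) simp
      then show "(\<lambda>x. indicator {a..b} x *\<^sub>R w x) \<in> borel_measurable lborel"
        by simp
    qed
    show "AE x in lborel. norm (indicator {a..b} x *\<^sub>R (w x * \<rho> x)) \<le> norm (B * (indicator {p..q} x *\<^sub>R \<rho> x))"
    proof (intro AE_I2)
      fix x
      show "norm (indicator {a..b} x *\<^sub>R (w x * \<rho> x)) \<le> norm (B * (indicator {p..q} x *\<^sub>R \<rho> x))"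
      proof (cases "x \<in> {a..b}")
        case True
        then have "x \<in> {p..q}" using sub by auto
        with True B[OF True] B0 show ?thesis
          by (simp add: abs_mult mult_right_mono)
      qed simp
    qed
  qed
qed


lemma arith_aux:
  fixes K D N :: real assumes N: "N > 1"
  shows "K * (D / N)^2 + K * (D * (N - 1) / N)^2 / (N - 1) = K * D^2 / N"
proof -
  have n1: "N - 1 \<noteq> 0" "N \<noteq> 0" using N by auto
  have h: "(D * (N - 1) / N)^2 / (N - 1) = D^2 * (N - 1) / N^2"
    using n1 by (simp add: power_divide power_mult_distrib power2_eq_square)
  have "K * (D / N)^2 + K * (D^2 * (N - 1) / N^2) = K * D^2 / N"
    using n1 by (simp add: power_divide divide_simps power2_eq_square) algebra
  moreover have "K * (D * (N - 1) / N)^2 / (N - 1) = K * (D^2 * (N - 1) / N^2)"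
    by (metis h times_divide_eq_right)
  ultimately show ?thesis by simp
qed

lemma squeeze:
  fixes F :: "real \<Rightarrow> real \<Rightarrow> real" and v :: "real \<Rightarrow> real"
  assumes cont: "continuous_on {p..q} v"
    and add: "\<And>a b c. p \<le> a \<Longrightarrow> a \<le> b \<Longrightarrow> b \<le> c \<Longrightarrow> c \<le> q \<Longrightarrow> F a c = F a b + F b c"
    and loc: "\<And>a b. p \<le> a \<Longrightarrow> a \<le> b \<Longrightarrow> b \<le> q \<Longrightarrow> F a b \<le> K * (v a - v b)^2"
    and K: "0 \<le> K"
    and ab: "p \<le> a" "a \<le> b" "b \<le> q"
  shows "F a b \<le> 0"
proof -
  have main: "\<And>a b. p \<le> a \<Longrightarrow> a \<le> b \<Longrightarrow> b \<le> q \<Longrightarrow> F a b \<le> K * (v a - v b)^2 / (real n + 1)" for n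
  proof (induction n)
    case 0
    then show ?case using loc[of a b] by simp
  next
    case (Suc n)
    fix a b assume h: "p \<le> a" "a \<le> b" "b \<le> q"
    define D where "D = v a - v b"
    define t where "t = v a - D / (real n + 2)"
    have c1: "continuous_on {a..b} v" using cont h by (auto intro: continuous_on_subset)
    have "\<exists>c. a \<le> c \<and> c \<le> b \<and> v c = t"
    proof (cases "D \<ge> 0")
      case True
      have "D / (real n + 2) \<le> D / 1"
        by (rule divide_left_mono) (use True in auto)
      moreover have "0 \<le> D / (real n + 2)" using True by simp
      ultimately have "D / (real n + 2) \<le> D" "0 \<le> D / (real n + 2)" by simp_all
      then have "v b \<le> t" "t \<le> v a" unfolding t_def D_def by linarith+
      then show ?thesis using IVT2'[of v b t a, OF _ _ h(2) c1] by blast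
    next
      case False
      have "D / 1 \<le> D / (real n + 2)"
        by (rule divide_left_mono_neg) (use False in auto)
      moreover have "D / (real n + 2) \<le> 0" using False by (simp add: divide_nonpos_nonneg)
      ultimately have "D \<le> D / (real n + 2)" "D / (real n + 2) \<le> 0" by simp_all
      then have "v a \<le> t" "t \<le> v b" unfolding t_def D_def by linarith+
      then show ?thesis using IVT'[of v a t b, OF _ _ h(2) c1] by blast
    qed
    then obtain c where c: "a \<le> c" "c \<le> b" "v c = t" by blast
    have "F a b = F a c + F c b" using add[of a c b] h c by simp
    also have "\<dots> \<le> K * (v a - v c)^2 + K * (v c - v b)^2 / (real n + 1)"
      using loc[of a c] Suc.IH[of c b] h c by (intro add_mono) simp_all
    also have "\<dots> = K * D^2 / (real (Suc n) + 1)"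
    proof -
      have "v a - v c = D / (real n + 2)" using c t_def by simp
      moreover have "v c - v b = D - D / (real n + 2)" using c t_def D_def by simp
      moreover have "D - D / (real n + 2) = D * (real n + 1) / (real n + 2)"
        by (simp add: field_simps)
      ultimately have "v c - v b = D * (real n + 1) / (real n + 2)" by simp
      have "K * (D / (real n + 2))^2 + K * (D * (real n + 2 - 1) / (real n + 2))^2 / (real n + 2 - 1) = K * D^2 / (real n + 2)"
        by (rule arith_aux) simp
      then show ?thesis using \<open>v a - v c = D / (real n + 2)\<close> \<open>v c - v b = D * (real n + 1) / (real n + 2)\<close>
        by (simp add: add.commute)
    qed
    finally show "F a b \<le> K * (v a - v b)^2 / (real (Suc n) + 1)" unfolding D_def .
  qed
  show ?thesis
  proof (rule ccontr)
    assume "\<not> F a b \<le> 0"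
    then have pos: "F a b > 0" by simp
    obtain n :: nat where "K * (v a - v b)^2 / F a b < real n"
      using reals_Archimedean2 by blast
    then have n: "K * (v a - v b)^2 / F a b < real n + 1" by linarith
    then have "K * (v a - v b)^2 < F a b * (real n + 1)"
      using pos by (simp add: field_simps)
    then have "K * (v a - v b)^2 / (real n + 1) < F a b" by (simp add: field_simps)
    with main[OF ab, of n] show False by simp
  qed
qed


lemma pw:
  fixes \<eta> m v \<rho> :: real
  assumes "0 < \<eta>" "2 * m / \<eta> < 1" "0 < v" "v \<le> \<eta> - 2 * m" "0 \<le> \<rho>"
  shows "2 * (4 * pi * \<eta> * inverse (1 - 2 * m / \<eta>) * \<rho>) \<le> (2 * 4 * pi * \<eta>^2 / v) * \<rho>"
proof -
  have d: "0 < \<eta> - 2 * m" using assms by (simp add: field_simps)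
  have "inverse (1 - 2 * m / \<eta>) = \<eta> / (\<eta> - 2 * m)" using assms(1) d
    by (simp add: field_simps)
  then have "2 * (4 * pi * \<eta> * inverse (1 - 2 * m / \<eta>) * \<rho>) = (2 * 4 * pi * \<eta>^2 * \<rho>) / (\<eta> - 2 * m)"
    by (simp add: power2_eq_square)
  also have "\<dots> \<le> (2 * 4 * pi * \<eta>^2 * \<rho>) / v"
    by (rule divide_left_mono) (use assms d in auto)
  also have "\<dots> = (2 * 4 * pi * \<eta>^2 / v) * \<rho>" by simp
  finally show ?thesis .
qed

theorem lemma4p1:
  fixes M R1 r :: real and \<rho> :: "real \<Rightarrow> real"
  assumes "M > 0" and "R1 > 2 * M"
    and "set_integrable lborel {2 * M..R1} \<rho>"
    and "\<forall>\<eta>\<in>{2 * M..R1}. \<rho> \<eta> \<ge> 0"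
    and "\<forall>s\<in>{2 * M..R1}. 0 \<le> 2 * mass M R1 \<rho> s / s \<and> 2 * mass M R1 \<rho> s / s < 1"
    and "r \<in> {2 * M..R1}"
  shows "exp (- 2 * (LINT \<eta>:{r..R1}|lborel. 4 * pi * \<eta> * \<rho> \<eta> * e2lambda M R1 \<rho> \<eta>))
           \<ge> (r - 2 * M) / (r - 2 * mass M R1 \<rho> r)"
proof (cases "r = 2 * M")
  case True
  then show ?thesis by simp
next
  case False
  note M0 = assms(1) and rho = assms(3) and rnn = assms(4) and mb = assms(5)
  have r: "2 * M < r" "r \<le> R1" using False assms(6) by auto
  define g where "g = (\<lambda>\<eta>::real. 4 * pi * \<eta>^2 * \<rho> \<eta>)"
  define m where "m = mass M R1 \<rho>"
  have gi: "set_integrable lborel {a..b} g" if "{a..b} \<subseteq> {2 * M..R1}" for a b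
    unfolding g_def by (rule setint_cont_mult[OF rho _ that]) (intro continuous_intros)
  have gS: "g integrable_on {2 * M..R1}" using set_borel_integral_eq_integral(1)[OF gi] by simp
  have gsub: "g integrable_on {a..b}" if "2 * M \<le> a" "b \<le> R1" for a b
    using integrable_on_subinterval[OF gS] that by auto
  have gnn: "0 \<le> g \<eta>" if "\<eta> \<in> {2 * M..R1}" for \<eta>
    using rnn that unfolding g_def by auto
  have m_eq: "m s = M - integral {s..R1} g" if "s \<in> {2 * M..R1}" for s
  proof -
    have "(LINT \<eta>:{s..R1}|lborel. 4 * pi * \<eta>^2 * \<rho> \<eta>) = integral {s..R1} g"
      using set_borel_integral_eq_integral(2)[OF gi[of s R1]] that unfolding g_def by auto
    then show ?thesis unfolding m_def mass_def by simp
  qed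
  have Gcont: "continuous_on {2 * M..R1} (\<lambda>s. integral {s..R1} g)"
    by (rule indefinite_integral_continuous_1'[OF gS])
  have mcont: "continuous_on {2 * M..R1} m"
    by (rule continuous_on_eq[where f="\<lambda>s. M - integral {s..R1} g"])
       (use Gcont m_eq in \<open>auto intro!: continuous_intros\<close>)
  have comb: "integral {a..R1} g = integral {a..b} g + integral {b..R1} g"
    if "2 * M \<le> a" "a \<le> b" "b \<le> R1" for a b
    using Henstock_Kurzweil_Integration.integral_combine[OF that(2,3) gsub[OF that(1) order_refl]] by simp
  have mdiff: "m b - m a = integral {a..b} g" if "2 * M \<le> a" "a \<le> b" "b \<le> R1" for a b
    using comb[OF that] m_eq[of a] m_eq[of b] that by auto
  have intnn: "0 \<le> integral {a..b} g" if "2 * M \<le> a" "b \<le> R1" for a b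
    by (rule integral_nonneg[OF gsub[OF that]]) (use gnn that in auto)
  have mR1: "m R1 = M" using mdiff[of R1 R1] m_eq[of R1] r by simp
  have mleM: "m s \<le> M" if "s \<in> {2 * M..R1}" for s
    using m_eq[OF that] intnn[of s R1] that by auto
  define c where "c = r - 2 * M"
  have c0: "0 < c" using r c_def by simp
  define v where "v = (\<lambda>s. r - 2 * m s)"
  have vge: "c \<le> v s" if "s \<in> {r..R1}" for s
    using mleM[of s] that r unfolding v_def c_def by auto
  have vpos: "0 < v s" if "s \<in> {r..R1}" for s using vge[OF that] c0 by simp
  have vcont: "continuous_on {r..R1} v"
    unfolding v_def using r by (intro continuous_intros continuous_on_subset[OF mcont]) auto
  have vdiff: "v a - v b = 2 * integral {a..b} g" if "r \<le> a" "a \<le> b" "b \<le> R1" for a b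
    using mdiff[of a b] that r unfolding v_def by auto
  have vmono: "v b \<le> v a" if "r \<le> a" "a \<le> b" "b \<le> R1" for a b
    using vdiff[OF that] intnn[of a b] that r by auto
  define h where "h = (\<lambda>\<eta>. (2 * 4 * pi * \<eta>^2 / v \<eta>) * \<rho> \<eta>)"
  have hi: "set_integrable lborel {r..R1} h"
    unfolding h_def
  proof (rule setint_cont_mult[OF rho _])
    have vnz: "v s \<noteq> 0" if "s \<in> {r..R1}" for s using vpos[OF that] by simp
    show "continuous_on {r..R1} (\<lambda>\<eta>. 2 * 4 * pi * \<eta>^2 / v \<eta>)"
      by (intro continuous_intros vcont) (use vnz in auto)
  qed (use r in auto)
  have hR: "h integrable_on {r..R1}" using set_borel_integral_eq_integral(1)[OF hi] .
  have hsub: "h integrable_on {a..b}" if "r \<le> a" "b \<le> R1" for a b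
    using integrable_on_subinterval[OF hR] that by auto
  define F where "F = (\<lambda>a b. integral {a..b} h - (ln (v a) - ln (v b)))"
  have Fle: "F r R1 \<le> 0"
  proof (rule squeeze[where v = v and K = "1 / c^2" and p = r and q = R1 and F = F])
    show "continuous_on {r..R1} v" by (rule vcont)
    show "F a c' = F a b + F b c'" if "r \<le> a" "a \<le> b" "b \<le> c'" "c' \<le> R1" for a b c'
      unfolding F_def using Henstock_Kurzweil_Integration.integral_combine[OF that(2,3) hsub[OF that(1,4)]] by simp
    show "0 \<le> 1 / c^2" by simp
    show "F a b \<le> 1 / c^2 * (v a - v b)^2" if ab: "r \<le> a" "a \<le> b" "b \<le> R1" for a b
    proof -
      have va: "c \<le> v a" and vb: "c \<le> v b" using vge ab by auto
      have vap: "0 < v a" and vbp: "0 < v b" using va vb c0 by auto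
      define D where "D = v a - v b"
      have D0: "0 \<le> D" using vmono[OF ab] D_def by simp
      have "integral {a..b} h \<le> integral {a..b} (\<lambda>\<eta>. (2 / v b) * g \<eta>)"
      proof (rule integral_le[OF hsub[OF ab(1,3)]])
        show "(\<lambda>\<eta>. (2 / v b) * g \<eta>) integrable_on {a..b}"
          using gsub[of a b] ab r by (intro integrable_on_mult_right) auto
        fix \<eta> assume e: "\<eta> \<in> {a..b}"
        have ve: "v b \<le> v \<eta>" using vmono[of \<eta> b] e ab by auto
        have g0: "0 \<le> g \<eta>" using gnn[of \<eta>] e ab r by auto
        have "h \<eta> = 2 * g \<eta> / v \<eta>" unfolding h_def g_def by simp
        also have "\<dots> \<le> 2 * g \<eta> / v b"
          by (rule divide_left_mono) (use ve g0 vbp in auto)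
        finally show "h \<eta> \<le> (2 / v b) * g \<eta>" by simp
      qed
      also have "\<dots> = (2 / v b) * integral {a..b} g"
        by (simp add: integral_mult[symmetric] gsub ab r)
      also have "\<dots> = D / v b" using vdiff[OF ab] D_def by simp
      finally have I: "integral {a..b} h \<le> D / v b" .
      have "ln (v b / v a) \<le> v b / v a - 1" by (rule ln_le_minus_one) (use vap vbp in simp)
      then have L: "D / v a \<le> ln (v a) - ln (v b)"
        using vap vbp by (simp add: ln_div D_def diff_divide_distrib)
      have "F a b \<le> D / v b - D / v a" unfolding F_def using I L by simp
      also have "\<dots> = D^2 / (v a * v b)"
        using vap vbp by (simp add: field_simps power2_eq_square) (simp add: D_def algebra_simps)
      also have "\<dots> \<le> D^2 / (c * c)"
        by (rule frac_le) (use va vb c0 in \<open>auto intro: mult_mono\<close>)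
      finally show ?thesis unfolding D_def by (simp add: power2_eq_square)
    qed
  qed (use r in auto)
  then have hI: "integral {r..R1} h \<le> ln (v r) - ln (v R1)" unfolding F_def by simp
  define w2 where "w2 = (\<lambda>\<eta>. 4 * pi * \<eta> * e2lambda M R1 \<rho> \<eta>)"
  have e2eq: "e2lambda M R1 \<rho> s = inverse (1 - 2 * (M - integral {s..R1} g) / s)" if "s \<in> {2*M..R1}" for s
    unfolding e2lambda_def using m_eq[OF that] m_def by simp
  have w2cont: "continuous_on {r..R1} w2"
  proof -
    have "continuous_on {r..R1} (\<lambda>s. 4 * pi * s * inverse (1 - 2 * (M - integral {s..R1} g) / s))"
    proof -
      have nz1: "s \<noteq> 0" if "s \<in> {r..R1}" for s using that r M0 by auto
      have nz2: "1 - 2 * (M - integral {s..R1} g) / s \<noteq> 0" if s: "s \<in> {r..R1}" for s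
      proof -
        have sS: "s \<in> {2*M..R1}" using s r by auto
        have "2 * m s / s < 1" using mb sS unfolding m_def by blast
        then have "2 * (M - integral {s..R1} g) / s < 1" unfolding m_eq[OF sS] .
        then show ?thesis by linarith
      qed
      show ?thesis
        by (intro continuous_intros continuous_on_subset[OF Gcont]) (use nz1 nz2 r in auto)
    qed
    then show ?thesis unfolding w2_def
      by (rule continuous_on_eq) (use e2eq r in auto)
  qed
  have wi: "set_integrable lborel {r..R1} (\<lambda>\<eta>. w2 \<eta> * \<rho> \<eta>)"
    by (rule setint_cont_mult[OF rho w2cont]) (use r in auto)
  have goal_eq: "(\<lambda>\<eta>. 4 * pi * \<eta> * \<rho> \<eta> * e2lambda M R1 \<rho> \<eta>) = (\<lambda>\<eta>. w2 \<eta> * \<rho> \<eta>)"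
    unfolding w2_def by (auto simp: fun_eq_iff mult_ac)
  define J where "J = integral {r..R1} (\<lambda>\<eta>. w2 \<eta> * \<rho> \<eta>)"
  have LJ: "(LINT \<eta>:{r..R1}|lborel. 4 * pi * \<eta> * \<rho> \<eta> * e2lambda M R1 \<rho> \<eta>) = J"
    unfolding goal_eq J_def by (rule set_borel_integral_eq_integral(2)[OF wi])
  have "2 * J = integral {r..R1} (\<lambda>\<eta>. 2 * (w2 \<eta> * \<rho> \<eta>))"
    unfolding J_def by (rule integral_mult[OF set_borel_integral_eq_integral(1)[OF wi]])
  also have "\<dots> \<le> integral {r..R1} h"
  proof (rule integral_le[OF _ hR])
    show "(\<lambda>\<eta>. 2 * (w2 \<eta> * \<rho> \<eta>)) integrable_on {r..R1}"
      using set_borel_integral_eq_integral(1)[OF wi] by (intro integrable_on_mult_right)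
    fix \<eta> assume e: "\<eta> \<in> {r..R1}"
    then have eS: "\<eta> \<in> {2*M..R1}" using r by auto
    have "2 * (4 * pi * \<eta> * inverse (1 - 2 * m \<eta> / \<eta>) * \<rho> \<eta>) \<le> (2 * 4 * pi * \<eta>^2 / v \<eta>) * \<rho> \<eta>"
    proof (rule pw)
      show "0 < \<eta>" using eS M0 by auto
      show "2 * m \<eta> / \<eta> < 1" using mb eS m_def by auto
      show "0 < v \<eta>" by (rule vpos[OF e])
      show "v \<eta> \<le> \<eta> - 2 * m \<eta>" unfolding v_def using e by auto
      show "0 \<le> \<rho> \<eta>" using rnn eS by auto
    qed
    then show "2 * (w2 \<eta> * \<rho> \<eta>) \<le> h \<eta>"
      unfolding w2_def h_def e2lambda_def m_def by (simp add: mult_ac)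
  qed
  finally have "2 * J \<le> ln (v r) - ln (v R1)" using hI by simp
  then have "ln (v R1) - ln (v r) \<le> - 2 * J" by simp
  then have E: "exp (ln (v R1) - ln (v r)) \<le> exp (- 2 * J)" by (simp only: exp_le_cancel_iff)
  have E2: "exp (ln (v R1) - ln (v r)) = v R1 / v r"
    using vpos[of R1] vpos[of r] r by (simp add: exp_diff)
  have v1: "v R1 = r - 2 * M" unfolding v_def using mR1 by simp
  have v2: "v r = r - 2 * mass M R1 \<rho> r" unfolding v_def m_def by simp
  from E have "v R1 / v r \<le> exp (- 2 * J)" unfolding E2 .
  then show ?thesis unfolding LJ v1 v2 .
qed

end
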